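(* Assume $q^{2(\alpha,\lambda)}=-q^{-2}$, and let $M_\lambda$ be the quotient of the parabolic Verma module $\hat M_\lambda$ by the submodule $U_\hbar(\mathfrak{sp}(4))f_\delta v_\lambda$. Then $M_\lambda$ is an irreducible $U_\hbar(\mathfrak{sp}(4))$-module.
   Context: Setting: $\alpha=\varepsilon_1-\varepsilon_2$, $\beta=2\varepsilon_2$, $\gamma=\alpha+\beta$, $\delta=2\alpha+\beta$ with $(\varepsilon_i,\varepsilon_j)=\delta_{ij}$; $q=e^\hbar$. $U_\hbar(\mathfrak{g})$, $\mathfrak{g}=\mathfrak{sp}(4)$, is generated by $e_\alpha,e_\beta,f_\alpha,f_\beta,h_\alpha,h_\beta$ with $[h_\alpha,h_\beta]=0$, $[h_\mu,e_\nu]=(\mu,\nu)e_\nu$, $[h_\mu,f_\nu]=-(\mu,\nu)f_\nu$ for $\mu,\nu\in\{\alpha,\beta\}$, $[e_\alpha,f_\alpha]=\frac{q^{h_\alpha}-q^{-h_\alpha}}{q-q^{-1}}$, $[e_\beta,f_\beta]=\frac{q^{h_\beta}-q^{-h_\beta}}{q^2-q^{-2}}$, $[e_\alpha,f_\beta]=0=[e_\beta,f_\alpha]$, plus the quantum Serre relations $e_\alpha^3e_\beta-(q^2+1+q^{-2})e_\alpha^2e_\beta e_\alpha+(q^2+1+q^{-2})e_\alpha e_\beta e_\alpha^2-e_\beta e_\alpha^3=0$, $e_\beta^2e_\alpha-(q^2+q^{-2})e_\beta e_\alpha e_\beta+e_\alpha e_\beta^2=0$ and the same for $f$. Root vectors: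 $f_\gamma=f_\beta f_\alpha-q^{-2}f_\alpha f_\beta$, $f_\delta=f_\gamma f_\alpha-q^{2}f_\alpha f_\gamma$. Let $U_\hbar(\mathfrak{p}^+)$ be the subalgebra generated by $e_\alpha,e_\beta,f_\beta,h_\alpha,h_\beta$. For a weight $\lambda$ with $(\lambda,\beta)=0$, $\mathbb{C}_\lambda$ is the one-dimensional $U_\hbar(\mathfrak{p}^+)$-module with $e_\alpha,e_\beta,f_\beta,h_\beta\mapsto0$, $h_\alpha\mapsto(\alpha,\lambda)$ (so $q^{h_\alpha}$ acts by $q^{(\alpha,\lambda)}$); $\hat M_\lambda=U_\hbar(\mathfrak{g})\otimes_{U_\hbar(\mathfrak{p}^+)}\mathbb{C}_\lambda$, $v_\lambda=1\otimes1$. *)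

theory Defs
  imports "HOL-Analysis.Analysis"
begin

text \<open>Conventions. hbar is a nonzero complex number, q = exp hbar (assumed not a root of unity
in the theorem), and q to the power z means exp (hbar * z) for complex z.
A U_hbar(sp(4))-module is a complex vector space V (abstract type 'v with scalar
multiplication sc) with linear operators ea, eb, fa, fb, ha, hb (for e_alpha, e_beta,
f_alpha, f_beta, h_alpha, h_beta) which is a weight module (spanned by joint eigenvectors
of ha, hb), so that q^{h_alpha}, q^{h_beta} make sense (acting on a joint eigenvector of
eigenvalues (a,b) by q^a, q^b), and all defining relations of U_hbar(sp(4)) hold.
Inner products: (alpha,alpha)=2, (alpha,beta)=-2, (beta,beta)=4.\<close>

definition qp :: "complex \<Rightarrow> complex \<Rightarrow> complex" where
  "qp hbar z = exp (hbar * z)"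

definition comm :: "('v::ab_group_add \<Rightarrow> 'v) \<Rightarrow> ('v \<Rightarrow> 'v) \<Rightarrow> 'v \<Rightarrow> 'v" where
  "comm A B = (\<lambda>w. A (B w) - B (A w))"

definition is_weight_vec ::
  "(complex \<Rightarrow> 'v::ab_group_add \<Rightarrow> 'v) \<Rightarrow> ('v \<Rightarrow> 'v) \<Rightarrow> ('v \<Rightarrow> 'v) \<Rightarrow> complex \<Rightarrow> complex \<Rightarrow> 'v \<Rightarrow> bool" where
  "is_weight_vec sc ha hb a b w \<longleftrightarrow> ha w = sc a w \<and> hb w = sc b w"

definition serre3 :: "complex \<Rightarrow> ('v::ab_group_add \<Rightarrow> 'v) \<Rightarrow> ('v \<Rightarrow> 'v) \<Rightarrow> (complex \<Rightarrow> 'v \<Rightarrow> 'v) \<Rightarrow> bool" where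
  "serre3 q x y sc \<longleftrightarrow> (\<forall>w. x (x (x (y w))) - sc (q^2 + 1 + inverse q ^ 2) (x (x (y (x w))))
       + sc (q^2 + 1 + inverse q ^ 2) (x (y (x (x w)))) - y (x (x (x w))) = 0)"

definition serre2 :: "complex \<Rightarrow> ('v::ab_group_add \<Rightarrow> 'v) \<Rightarrow> ('v \<Rightarrow> 'v) \<Rightarrow> (complex \<Rightarrow> 'v \<Rightarrow> 'v) \<Rightarrow> bool" where
  "serre2 q y x sc \<longleftrightarrow> (\<forall>w. y (y (x w)) - sc (q^2 + inverse q ^ 2) (y (x (y w))) + x (y (y w)) = 0)"

definition Uq_sp4_module ::
  "complex \<Rightarrow> (complex \<Rightarrow> 'v::ab_group_add \<Rightarrow> 'v) \<Rightarrow> ('v \<Rightarrow> 'v) \<Rightarrow> ('v \<Rightarrow> 'v) \<Rightarrow> ('v \<Rightarrow> 'v)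
     \<Rightarrow> ('v \<Rightarrow> 'v) \<Rightarrow> ('v \<Rightarrow> 'v) \<Rightarrow> ('v \<Rightarrow> 'v) \<Rightarrow> bool" where
  "Uq_sp4_module hbar sc ea eb fa fb ha hb \<longleftrightarrow>
     (let q = exp hbar in
     vector_space sc \<and>
     (\<forall>A\<in>{ea, eb, fa, fb, ha, hb}. Vector_Spaces.linear sc sc A) \<and>
     module.span sc {w. \<exists>a b. is_weight_vec sc ha hb a b w} = UNIV \<and>
     comm ha hb = (\<lambda>w. 0) \<and>
     comm ha ea = (\<lambda>w. sc 2 (ea w)) \<and> comm ha eb = (\<lambda>w. sc (-2) (eb w)) \<and>
     comm hb ea = (\<lambda>w. sc (-2) (ea w)) \<and> comm hb eb = (\<lambda>w. sc 4 (eb w)) \<and>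
     comm ha fa = (\<lambda>w. sc (-2) (fa w)) \<and> comm ha fb = (\<lambda>w. sc 2 (fb w)) \<and>
     comm hb fa = (\<lambda>w. sc 2 (fa w)) \<and> comm hb fb = (\<lambda>w. sc (-4) (fb w)) \<and>
     (\<forall>a b w. is_weight_vec sc ha hb a b w \<longrightarrow>
        comm ea fa w = sc ((qp hbar a - qp hbar (-a)) / (q - inverse q)) w \<and>
        comm eb fb w = sc ((qp hbar b - qp hbar (-b)) / (q^2 - inverse q ^ 2)) w) \<and>
     comm ea fb = (\<lambda>w. 0) \<and> comm eb fa = (\<lambda>w. 0) \<and>
     serre3 q ea eb sc \<and> serre2 q eb ea sc \<and> serre3 q fa fb sc \<and> serre2 q fb fa sc)"

definition f_gamma :: "complex \<Rightarrow> (complex \<Rightarrow> 'v::ab_group_add \<Rightarrow> 'v) \<Rightarrow> ('v \<Rightarrow> 'v) \<Rightarrow> ('v \<Rightarrow> 'v) \<Rightarrow> 'v \<Rightarrow> 'v" where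
  "f_gamma hbar sc fa fb = (\<lambda>w. fb (fa w) - sc (inverse (exp hbar) ^ 2) (fa (fb w)))"

definition f_delta :: "complex \<Rightarrow> (complex \<Rightarrow> 'v::ab_group_add \<Rightarrow> 'v) \<Rightarrow> ('v \<Rightarrow> 'v) \<Rightarrow> ('v \<Rightarrow> 'v) \<Rightarrow> 'v \<Rightarrow> 'v" where
  "f_delta hbar sc fa fb = (\<lambda>w. f_gamma hbar sc fa fb (fa w) - sc (exp hbar ^ 2) (fa (f_gamma hbar sc fa fb w)))"

definition is_submodule ::
  "(complex \<Rightarrow> 'v::ab_group_add \<Rightarrow> 'v) \<Rightarrow> ('v \<Rightarrow> 'v) \<Rightarrow> ('v \<Rightarrow> 'v) \<Rightarrow> ('v \<Rightarrow> 'v)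
     \<Rightarrow> ('v \<Rightarrow> 'v) \<Rightarrow> ('v \<Rightarrow> 'v) \<Rightarrow> ('v \<Rightarrow> 'v) \<Rightarrow> 'v set \<Rightarrow> bool" where
  "is_submodule sc ea eb fa fb ha hb W \<longleftrightarrow>
     module.subspace sc W \<and> (\<forall>A\<in>{ea, eb, fa, fb, ha, hb}. A ` W \<subseteq> W)"

definition irreducible_module ::
  "(complex \<Rightarrow> 'v::ab_group_add \<Rightarrow> 'v) \<Rightarrow> ('v \<Rightarrow> 'v) \<Rightarrow> ('v \<Rightarrow> 'v) \<Rightarrow> ('v \<Rightarrow> 'v)
     \<Rightarrow> ('v \<Rightarrow> 'v) \<Rightarrow> ('v \<Rightarrow> 'v) \<Rightarrow> ('v \<Rightarrow> 'v) \<Rightarrow> bool" where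
  "irreducible_module sc ea eb fa fb ha hb \<longleftrightarrow>
     (UNIV :: 'v set) \<noteq> {0} \<and>
     (\<forall>W. is_submodule sc ea eb fa fb ha hb W \<longrightarrow> W = {0} \<or> W = UNIV)"

text \<open>Pairing of weights: lambda = l1 eps1 + l2 eps2, alpha = eps1 - eps2, beta = 2 eps2.\<close>
definition ip_alpha :: "complex \<times> complex \<Rightarrow> complex" where
  "ip_alpha l = fst l - snd l"
definition ip_beta :: "complex \<times> complex \<Rightarrow> complex" where
  "ip_beta l = 2 * snd l"

end

theory Submission
  imports Defs
begin

locale sp4 =
  fixes hbar :: complex and sc :: "complex \<Rightarrow> 'v::ab_group_add \<Rightarrow> 'v"
    and ea eb fa fb ha hb :: "'v \<Rightarrow> 'v" and v :: 'v and a :: complex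
  assumes VS: "vector_space sc"
  and ladd: "A \<in> {ea,eb,fa,fb,ha,hb} \<Longrightarrow> A (x + y) = A x + A y"
  and lsc: "A \<in> {ea,eb,fa,fb,ha,hb} \<Longrightarrow> A (sc c x) = sc c (A x)"
  and ha_fa: "ha (fa w) = fa (ha w) + sc (-2) (fa w)"
  and ha_fb: "ha (fb w) = fb (ha w) + sc 2 (fb w)"
  and hb_fa: "hb (fa w) = fa (hb w) + sc 2 (fa w)"
  and hb_fb: "hb (fb w) = fb (hb w) + sc (-4) (fb w)"
  and ea_fa: "ha w = sc s w \<Longrightarrow> hb w = sc t w \<Longrightarrow>
      ea (fa w) = fa (ea w) + sc ((qp hbar s - qp hbar (-s)) / (exp hbar - inverse (exp hbar))) w"
  and eb_fb: "ha w = sc s w \<Longrightarrow> hb w = sc t w \<Longrightarrow>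
      eb (fb w) = fb (eb w) + sc ((qp hbar t - qp hbar (-t)) / (exp hbar ^ 2 - inverse (exp hbar) ^ 2)) w"
  and ea_fb: "ea (fb w) = fb (ea w)"
  and eb_fa: "eb (fa w) = fa (eb w)"
  and serre3: "fa (fa (fa (fb w))) - sc (exp hbar ^ 2 + 1 + inverse (exp hbar) ^ 2) (fa (fa (fb (fa w))))
       + sc (exp hbar ^ 2 + 1 + inverse (exp hbar) ^ 2) (fa (fb (fa (fa w)))) - fb (fa (fa (fa w))) = 0"
  and serre2: "fb (fb (fa w)) - sc (exp hbar ^ 2 + inverse (exp hbar) ^ 2) (fb (fa (fb w))) + fa (fb (fb w)) = 0"
  and qgen: "\<And>n::nat. n > 0 \<Longrightarrow> exp hbar ^ n \<noteq> 1"
  and cond: "qp hbar (2 * a) = - qp hbar (-2)"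
  and v_hw: "ea v = 0" "eb v = 0" "fb v = 0" "hb v = 0" "ha v = sc a v"
  and v_fd: "f_delta hbar sc fa fb v = 0"
begin

sublocale vector_space sc by (rule VS)

definition lin_op :: "('v \<Rightarrow> 'v) \<Rightarrow> bool" where
  "lin_op A \<longleftrightarrow> (\<forall>x y. A (x + y) = A x + A y) \<and> (\<forall>c x. A (sc c x) = sc c (A x))"

lemma lin_gen: "A \<in> {ea,eb,fa,fb,ha,hb} \<Longrightarrow> lin_op A"
  using ladd lsc unfolding lin_op_def by blast

lemma lin_add: "lin_op A \<Longrightarrow> A (x + y) = A x + A y" unfolding lin_op_def by blast
lemma lin_sc: "lin_op A \<Longrightarrow> A (sc c x) = sc c (A x)" unfolding lin_op_def by blast
lemma lin_zero: "lin_op A \<Longrightarrow> A 0 = 0" using lin_sc[of A 0 0] by simp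
lemma lin_neg: "lin_op A \<Longrightarrow> A (- x) = - A x" using lin_sc[of A "-1" x] by simp
lemma lin_diff: "lin_op A \<Longrightarrow> A (x - y) = A x - A y"
  using lin_add[of A x "-y"] lin_neg[of A y] by simp

lemma lin_comp: "lin_op A \<Longrightarrow> lin_op B \<Longrightarrow> lin_op (\<lambda>x. A (B x))"
  unfolding lin_op_def by simp
lemma lin_minus: "lin_op A \<Longrightarrow> lin_op B \<Longrightarrow> lin_op (\<lambda>x. A x - B x)"
  unfolding lin_op_def by (simp add: algebra_simps)
lemma lin_plus: "lin_op A \<Longrightarrow> lin_op B \<Longrightarrow> lin_op (\<lambda>x. A x + B x)"
  unfolding lin_op_def by (simp add: algebra_simps)
lemma lin_scal: "lin_op A \<Longrightarrow> lin_op (\<lambda>x. sc c (A x))"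
  unfolding lin_op_def by (simp add: algebra_simps scale_left_commute)
lemma lin_pow: "lin_op A \<Longrightarrow> lin_op (A ^^ n)"
  by (induction n) (auto simp: lin_op_def)

lemmas linI = lin_gen[of ea, simplified] lin_gen[of eb, simplified] lin_gen[of fa, simplified]
  lin_gen[of fb, simplified] lin_gen[of ha, simplified] lin_gen[of hb, simplified]

lemma ea_add[simp]: "ea (x + y) = ea x + ea y" and ea_sc[simp]: "ea (sc c x) = sc c (ea x)"
  and ea_diff[simp]: "ea (x - y) = ea x - ea y" and ea_0[simp]: "ea 0 = 0"
  using linI(1) lin_add lin_sc lin_diff lin_zero by blast+
lemma eb_add[simp]: "eb (x + y) = eb x + eb y" and eb_sc[simp]: "eb (sc c x) = sc c (eb x)"
  and eb_diff[simp]: "eb (x - y) = eb x - eb y" and eb_0[simp]: "eb 0 = 0"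
  using linI(2) lin_add lin_sc lin_diff lin_zero by blast+
lemma fa_add[simp]: "fa (x + y) = fa x + fa y" and fa_sc[simp]: "fa (sc c x) = sc c (fa x)"
  and fa_diff[simp]: "fa (x - y) = fa x - fa y" and fa_0[simp]: "fa 0 = 0"
  using linI(3) lin_add lin_sc lin_diff lin_zero by blast+
lemma fb_add[simp]: "fb (x + y) = fb x + fb y" and fb_sc[simp]: "fb (sc c x) = sc c (fb x)"
  and fb_diff[simp]: "fb (x - y) = fb x - fb y" and fb_0[simp]: "fb 0 = 0"
  using linI(4) lin_add lin_sc lin_diff lin_zero by blast+
lemma ha_add[simp]: "ha (x + y) = ha x + ha y" and ha_sc[simp]: "ha (sc c x) = sc c (ha x)"
  and ha_diff[simp]: "ha (x - y) = ha x - ha y" and ha_0[simp]: "ha 0 = 0"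
  using linI(5) lin_add lin_sc lin_diff lin_zero by blast+
lemma hb_add[simp]: "hb (x + y) = hb x + hb y" and hb_sc[simp]: "hb (sc c x) = sc c (hb x)"
  and hb_diff[simp]: "hb (x - y) = hb x - hb y" and hb_0[simp]: "hb 0 = 0"
  using linI(6) lin_add lin_sc lin_diff lin_zero by blast+

abbreviation "fg \<equiv> f_gamma hbar sc fa fb"
abbreviation "fd \<equiv> f_delta hbar sc fa fb"

lemma q_nz[simp]: "exp hbar \<noteq> 0" by simp

lemma fg_eq: "fg w = fb (fa w) - sc (inverse (exp hbar) ^ 2) (fa (fb w))"
  by (simp add: f_gamma_def)

lemma fd_expand: "fd w = fb (fa (fa w)) - sc (exp hbar ^ 2 + inverse (exp hbar) ^ 2) (fa (fb (fa w))) + fa (fa (fb w))"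
proof -
  have e: "exp hbar ^ 2 * inverse (exp hbar) ^ 2 = 1" by (simp add: field_simps)
  show ?thesis unfolding f_delta_def fg_eq by (simp add: algebra_simps e)
qed

lemma lin_fg: "lin_op fg"
  unfolding lin_op_def f_gamma_def by (simp add: algebra_simps)
lemma lin_fd: "lin_op fd"
  unfolding lin_op_def fd_expand by (simp add: algebra_simps)

lemma fd_fa: "fd (fa w) = fa (fd w)"
proof -
  have s: "fb (fa (fa (fa w))) = fa (fa (fa (fb w))) - sc (exp hbar ^ 2 + 1 + inverse (exp hbar) ^ 2) (fa (fa (fb (fa w))))
       + sc (exp hbar ^ 2 + 1 + inverse (exp hbar) ^ 2) (fa (fb (fa (fa w))))"
    using serre3[of w] by (simp add: algebra_simps)
  show ?thesis unfolding fd_expand s by (simp add: algebra_simps)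
qed

lemma fd_fb: "fd (fb w) = fb (fd w)"
proof -
  have s1: "fb (fb (fa (fa w))) = sc (exp hbar ^ 2 + inverse (exp hbar) ^ 2) (fb (fa (fb (fa w)))) - fa (fb (fb (fa w)))"
    using serre2[of "fa w"] by (simp add: algebra_simps)
  have s2: "fa (fb (fb (fa w))) = sc (exp hbar ^ 2 + inverse (exp hbar) ^ 2) (fa (fb (fa (fb w)))) - fa (fa (fb (fb w)))"
    using arg_cong[OF serre2[of w], of fa] by (simp add: algebra_simps)
  show ?thesis unfolding fd_expand by (simp add: algebra_simps s1 s2)
qed


definition wv :: "'v \<Rightarrow> complex \<Rightarrow> complex \<Rightarrow> bool" where
  "wv x s t \<longleftrightarrow> ha x = sc s x \<and> hb x = sc t x"

lemma wv_fa: "wv x s t \<Longrightarrow> wv (fa x) (s - 2) (t + 2)"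
  unfolding wv_def by (simp add: ha_fa hb_fa algebra_simps)
lemma wv_fb: "wv x s t \<Longrightarrow> wv (fb x) (s + 2) (t - 4)"
  unfolding wv_def by (simp add: ha_fb hb_fb algebra_simps)
lemma wv_sc: "wv x s t \<Longrightarrow> wv (sc c x) s t"
  unfolding wv_def by (simp add: scale_left_commute)
lemma wv_diff: "wv x s t \<Longrightarrow> wv y s t \<Longrightarrow> wv (x - y) s t"
  unfolding wv_def by (simp add: algebra_simps)
lemma wv_fg: "wv x s t \<Longrightarrow> wv (fg x) s (t - 2)"
proof -
  assume w: "wv x s t"
  have 1: "wv (fb (fa x)) s (t - 2)" using wv_fb[OF wv_fa[OF w]] by simp
  have 2: "wv (fa (fb x)) s (t - 2)" using wv_fa[OF wv_fb[OF w]] by simp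
  show ?thesis unfolding fg_eq by (intro wv_diff wv_sc 1 2)
qed

definition u :: "nat \<Rightarrow> nat \<Rightarrow> 'v" where "u p r = (fa ^^ p) ((fg ^^ r) v)"

lemma u_Suc: "u (Suc p) r = fa (u p r)" unfolding u_def by simp
lemma u_0: "u 0 r = (fg ^^ r) v" unfolding u_def by simp
lemma u_00: "u 0 0 = v" unfolding u_def by simp

lemma wv_fgpow: "wv ((fg ^^ r) v) a (- 2 * of_nat r)"
proof (induction r)
  case 0 then show ?case using v_hw by (simp add: wv_def)
next
  case (Suc r)
  have e: "(- 2 * of_nat r - 2 :: complex) = - 2 * of_nat (Suc r)" by (simp add: algebra_simps)
  show ?case using wv_fg[OF Suc] unfolding e by simp
qed

lemma wv_u: "wv (u p r) (a - 2 * of_nat p) (2 * of_nat p - 2 * of_nat r)"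
proof (induction p)
  case 0 then show ?case using wv_fgpow[of r] by (simp add: u_0)
next
  case (Suc p) then show ?case using wv_fa[OF Suc] by (simp add: u_Suc algebra_simps)
qed

lemma fapow_sc: "(fa ^^ k) (sc c x) = sc c ((fa ^^ k) x)"
  using lin_sc[OF lin_pow[OF linI(3)]] by blast
lemma fapow_0: "(fa ^^ k) 0 = 0"
  using lin_zero[OF lin_pow[OF linI(3)]] by blast

lemma fd_fg: "fd (fg x) = fg (fd x)"
  unfolding fg_eq using lin_fd by (simp add: lin_diff lin_sc fd_fa fd_fb)

lemma fd_u: "fd (u p r) = 0"
proof -
  have "fd ((fg ^^ r) v) = 0" by (induction r) (auto simp: v_fd fd_fg lin_zero[OF lin_fg])
  then show ?thesis unfolding u_def by (induction p) (auto simp: fd_fa)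
qed

lemma fg_fa: "fg (fa x) = fd x + sc (exp hbar ^ 2) (fa (fg x))"
  unfolding f_delta_def by simp

lemma fg_fapow: "fg ((fa ^^ k) ((fg ^^ r) v)) = sc (exp hbar ^ (2 * k)) ((fa ^^ k) ((fg ^^ Suc r) v))"
proof (induction k)
  case 0 then show ?case by simp
next
  case (Suc k)
  have "fg ((fa ^^ Suc k) ((fg ^^ r) v)) = fg (fa (u k r))" by (simp add: u_def)
  also have "\<dots> = sc (exp hbar ^ 2) (fa (fg (u k r)))" by (simp add: fg_fa fd_u)
  also have "\<dots> = sc (exp hbar ^ (2 * Suc k)) ((fa ^^ Suc k) ((fg ^^ Suc r) v))"
  proof -
    have e: "exp hbar ^ 2 * exp hbar ^ (2 * k) = exp hbar ^ (2 * Suc k)"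
      by (simp add: power_add[symmetric])
    show ?thesis using Suc by (simp add: u_def fapow_sc e)
  qed
  finally show ?case .
qed

lemma fg_u: "fg (u p r) = sc (exp hbar ^ (2 * p)) (u p (Suc r))"
  using fg_fapow by (simp add: u_def)

lemma fb_fg: "fb (fg x) = sc (exp hbar ^ 2) (fg (fb x))"
proof -
  have e: "exp hbar ^ 2 * inverse (exp hbar) ^ 2 = 1" by (simp add: field_simps)
  have s: "fb (fb (fa x)) = sc (exp hbar ^ 2 + inverse (exp hbar) ^ 2) (fb (fa (fb x))) - fa (fb (fb x))"
    using serre2[of x] by (simp add: algebra_simps)
  show ?thesis unfolding fg_eq by (simp add: algebra_simps s e)
qed

lemma fb_fa: "fb (fa x) = fg x + sc (inverse (exp hbar) ^ 2) (fa (fb x))"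
  unfolding fg_eq by simp

lemma fb_fgpow: "fb ((fg ^^ r) v) = 0"
  by (induction r) (auto simp: v_hw fb_fg lin_zero[OF lin_fg])

primrec bc :: "nat \<Rightarrow> complex" where
  "bc 0 = 0" | "bc (Suc p) = exp hbar ^ (2 * p) + inverse (exp hbar) ^ 2 * bc p"

lemma fb_u0: "fb (u 0 r) = 0" by (simp add: u_0 fb_fgpow)

lemma fb_u: "fb (u (Suc p) r) = sc (bc (Suc p)) (u p (Suc r))"
proof (induction p)
  case 0 then show ?case by (simp add: u_Suc fb_fa fb_u0 fg_u)
next
  case (Suc p)
  show ?case
    apply (subst u_Suc, subst fb_fa, subst Suc)
    by (simp add: fg_u u_Suc[symmetric] algebra_simps)
qed

lemma u0_Suc: "u 0 (Suc r) = fb (u 1 r)"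
  using fb_u[of 0 r] by simp


lemma qp_add: "qp hbar (x + y) = qp hbar x * qp hbar y"
  unfolding qp_def by (simp add: distrib_left exp_add)
lemma qp_neg: "qp hbar (- x) = inverse (qp hbar x)"
  unfolding qp_def by (simp add: exp_minus)
lemma qp_nat: "qp hbar (of_nat n) = exp hbar ^ n"
  unfolding qp_def by (simp add: exp_of_nat_mult[symmetric] mult.commute)
lemma qp_0: "qp hbar 0 = 1" unfolding qp_def by simp
lemma qp_2: "qp hbar 2 = exp hbar ^ 2" using qp_nat[of 2] by simp
lemma qp_nz: "qp hbar x \<noteq> 0" unfolding qp_def by simp
lemma qp_m2n: "qp hbar (- 2 * of_nat n) = inverse (exp hbar) ^ (2 * n)"
  using qp_nat[of "2*n"] qp_neg[of "of_nat (2 * n)"] by (simp add: power_inverse)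

lemma Q4: "exp hbar ^ 4 \<noteq> 1" using qgen[of 4] by simp
lemma Q2: "exp hbar ^ 2 \<noteq> 1" using qgen[of 2] by simp
lemma Q2i: "exp hbar ^ 2 - inverse (exp hbar) ^ 2 \<noteq> 0"
proof
  assume "exp hbar ^ 2 - inverse (exp hbar) ^ 2 = 0"
  then have "exp hbar ^ 2 * exp hbar ^ 2 = 1" by (simp add: field_simps)
  then show False using Q4 by (simp add: power_add[symmetric])
qed
lemma Q1i: "exp hbar - inverse (exp hbar) \<noteq> 0"
proof
  assume "exp hbar - inverse (exp hbar) = 0"
  then have "exp hbar * exp hbar = 1" by (simp add: field_simps)
  then show False using Q2 by (simp add: power2_eq_square)
qed

lemma bscal: "(qp hbar (t + 2) - qp hbar (- (t + 2))) / (exp hbar ^ 2 - inverse (exp hbar) ^ 2)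
   - inverse (exp hbar) ^ 2 * ((qp hbar t - qp hbar (- t)) / (exp hbar ^ 2 - inverse (exp hbar) ^ 2)) = qp hbar t"
proof -
  have nz: "exp hbar ^ 2 - inverse (exp hbar) ^ 2 \<noteq> 0" by (rule Q2i)
  have P: "qp hbar t \<noteq> 0" by (rule qp_nz)
  have e1: "qp hbar (t + 2) = qp hbar t * exp hbar ^ 2" by (simp add: qp_add qp_2)
  have e2: "qp hbar (- (t + 2)) = inverse (qp hbar t) * inverse (exp hbar) ^ 2"
    by (simp only: qp_neg qp_add qp_2) (simp add: power_inverse inverse_mult_distrib)
  have gen: "\<And>D n1 n2 k P. D \<noteq> 0 \<Longrightarrow> n1 - k * n2 = P * D \<Longrightarrow> n1 / D - k * (n2 / D) = (P::complex)"
    by (simp add: field_simps)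
  show ?thesis unfolding e1 e2 qp_neg using P
    by (intro gen nz) (simp add: algebra_simps power_inverse)
qed

lemma eb_fg: "wv x s t \<Longrightarrow> eb (fg x) = fg (eb x) + sc (qp hbar t) (fa x)"
proof -
  assume w: "wv x s t"
  have wa: "wv (fa x) (s - 2) (t + 2)" by (rule wv_fa[OF w])
  have 1: "eb (fb (fa x)) = fb (fa (eb x)) + sc ((qp hbar (t + 2) - qp hbar (- (t + 2))) / (exp hbar ^ 2 - inverse (exp hbar) ^ 2)) (fa x)"
    using eb_fb[of "fa x" "s - 2" "t + 2"] wa by (simp add: wv_def eb_fa)
  have 2: "eb (fa (fb x)) = fa (fb (eb x)) + sc ((qp hbar t - qp hbar (- t)) / (exp hbar ^ 2 - inverse (exp hbar) ^ 2)) (fa x)"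
    using eb_fb[of x s t] w by (simp add: wv_def eb_fa)
  have gen: "\<And>k1 k2. eb (fb (fa x)) = fb (fa (eb x)) + sc k1 (fa x) \<Longrightarrow>
      eb (fa (fb x)) = fa (fb (eb x)) + sc k2 (fa x) \<Longrightarrow>
      eb (fg x) = fg (eb x) + sc (k1 - inverse (exp hbar) ^ 2 * k2) (fa x)"
    unfolding fg_eq by (simp add: algebra_simps)
  show ?thesis using gen[OF 1 2] unfolding bscal .
qed

primrec gc :: "nat \<Rightarrow> complex" where
  "gc 0 = 0" | "gc (Suc r) = exp hbar ^ 2 * gc r + qp hbar (- 2 * of_nat r)"

lemma fg_fa1: "fg (fa ((fg ^^ r) v)) = sc (exp hbar ^ 2) (fa ((fg ^^ Suc r) v))"
  using fg_fa[of "(fg ^^ r) v"] fd_u[of 0 r] by (simp add: u_0)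

lemma eb_fgpow: "eb ((fg ^^ Suc r) v) = sc (gc (Suc r)) (fa ((fg ^^ r) v))"
proof (induction r)
  case 0
  show ?case using eb_fg[of v a 0] v_hw by (simp add: wv_def qp_0 lin_zero[OF lin_fg])
next
  case (Suc r)
  define X where "X = (fg ^^ r) v"
  define Y where "Y = (fg ^^ Suc r) v"
  have hY: "(fg ^^ Suc (Suc r)) v = fg Y" by (simp add: Y_def)
  have IH: "eb Y = sc (gc (Suc r)) (fa X)" using Suc by (simp add: X_def Y_def)
  have wY: "wv Y a (- 2 * of_nat (Suc r))" unfolding Y_def by (rule wv_fgpow)
  have fX: "fg (fa X) = sc (exp hbar ^ 2) (fa Y)" unfolding X_def Y_def by (rule fg_fa1)
  have "eb (fg Y) = fg (eb Y) + sc (qp hbar (- 2 * of_nat (Suc r))) (fa Y)"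
    by (rule eb_fg[OF wY])
  also have "\<dots> = sc (exp hbar ^ 2 * gc (Suc r) + qp hbar (- 2 * of_nat (Suc r))) (fa Y)"
    unfolding IH lin_sc[OF lin_fg] fX by (simp add: algebra_simps)
  finally have "eb (fg Y) = sc (gc (Suc (Suc r))) (fa Y)" unfolding gc.simps(2)[of "Suc r"] .
  then show ?case unfolding hY Y_def[symmetric] .
qed

lemma eb_fapow: "eb ((fa ^^ p) x) = (fa ^^ p) (eb x)"
  by (induction p) (auto simp: eb_fa)

lemma u_Suc': "u (Suc p) r = (fa ^^ p) (fa ((fg ^^ r) v))"
  unfolding u_def by (simp only: funpow_Suc_right comp_apply)

lemma eb_u: "eb (u p (Suc r)) = sc (gc (Suc r)) (u (Suc p) r)"
  unfolding u_Suc' by (simp only: u_def eb_fapow eb_fgpow fapow_sc)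

lemma eb_u0: "eb (u p 0) = 0"
  unfolding u_def by (simp add: eb_fapow v_hw fapow_0)

lemma gc_closed: "(exp hbar ^ 2 - inverse (exp hbar) ^ 2) * gc r = exp hbar ^ (2 * r) - inverse (exp hbar) ^ (2 * r)"
proof (induction r)
  case 0 then show ?case by simp
next
  case (Suc r)
  have "(exp hbar ^ 2 - inverse (exp hbar) ^ 2) * gc (Suc r)
     = exp hbar ^ 2 * ((exp hbar ^ 2 - inverse (exp hbar) ^ 2) * gc r) + (exp hbar ^ 2 - inverse (exp hbar) ^ 2) * inverse (exp hbar) ^ (2 * r)"
    by (simp only: gc.simps qp_m2n) (simp add: algebra_simps)
  also have "\<dots> = exp hbar ^ (2 * Suc r) - inverse (exp hbar) ^ (2 * Suc r)"
  proof -
    have e1: "exp hbar ^ (2 * Suc r) = exp hbar ^ 2 * exp hbar ^ (2 * r)"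
      by (simp only: mult_Suc_right power_add)
    have e2: "inverse (exp hbar) ^ (2 * Suc r) = inverse (exp hbar) ^ 2 * inverse (exp hbar) ^ (2 * r)"
      by (simp only: mult_Suc_right power_add)
    show ?thesis unfolding Suc e1 e2 by (simp add: algebra_simps)
  qed
  finally show ?case .
qed

lemma gc_nz: "gc (Suc r) \<noteq> 0"
proof
  assume "gc (Suc r) = 0"
  then have "exp hbar ^ (2 * Suc r) = inverse (exp hbar) ^ (2 * Suc r)" using gc_closed[of "Suc r"] by simp
  then have "exp hbar ^ (2 * Suc r) * exp hbar ^ (2 * Suc r) = 1" by (simp add: power_inverse field_simps)
  moreover have "exp hbar ^ (4 * Suc r) = exp hbar ^ (2 * Suc r) * exp hbar ^ (2 * Suc r)"
  proof -
    have "(4::nat) * Suc r = 2 * Suc r + 2 * Suc r" by simp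
    then show ?thesis by (simp only: power_add)
  qed
  ultimately have "exp hbar ^ (4 * Suc r) = 1" by simp
  then show False using qgen[of "4 * Suc r"] by simp
qed




lemma ea_fg0: "ea x = 0 \<Longrightarrow> fb x = 0 \<Longrightarrow> wv x s t \<Longrightarrow> ea (fg x) = 0"
proof -
  assume e: "ea x = 0" and f: "fb x = 0" and w: "wv x s t"
  have "ea (fa x) = sc ((qp hbar s - qp hbar (- s)) / (exp hbar - inverse (exp hbar))) x"
    using ea_fa[of x s t] w e by (simp add: wv_def)
  then show ?thesis unfolding fg_eq by (simp add: ea_fb f)
qed

lemma ea_fgpow: "ea ((fg ^^ r) v) = 0"
proof (induction r)
  case 0 then show ?case by (simp add: v_hw)
next
  case (Suc r) then show ?case using ea_fg0[OF Suc fb_fgpow wv_fgpow] by simp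
qed

lemma ea_u0: "ea (u 0 r) = 0" by (simp add: u_0 ea_fgpow)

primrec c1 :: "nat \<Rightarrow> complex" where
  "c1 0 = 0"
| "c1 (Suc p) = c1 p + (qp hbar (a - 2 * of_nat p) - qp hbar (- (a - 2 * of_nat p))) / (exp hbar - inverse (exp hbar))"

lemma ea_u: "ea (u (Suc p) r) = sc (c1 (Suc p)) (u p r)"
proof (induction p)
  case 0
  show ?case using ea_fa[of "u 0 r" "a - 2 * of_nat 0" "2 * of_nat 0 - 2 * of_nat r"] wv_u[of 0 r]
    by (simp add: wv_def u_Suc ea_u0)
next
  case (Suc p)
  define X where "X = u p r"
  define Y where "Y = u (Suc p) r"
  have hY: "u (Suc (Suc p)) r = fa Y" by (simp add: Y_def u_Suc)
  have IH: "ea Y = sc (c1 (Suc p)) X" using Suc by (simp add: X_def Y_def)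
  have fX: "fa X = Y" by (simp add: X_def Y_def u_Suc)
  have wY: "wv Y (a - 2 * of_nat (Suc p)) (2 * of_nat (Suc p) - 2 * of_nat r)" unfolding Y_def by (rule wv_u)
  have "ea (fa Y) = fa (ea Y) + sc ((qp hbar (a - 2 * of_nat (Suc p)) - qp hbar (- (a - 2 * of_nat (Suc p)))) / (exp hbar - inverse (exp hbar))) Y"
    by (rule ea_fa[where t="2 * of_nat (Suc p) - 2 * of_nat r"]) (use wY in \<open>simp_all add: wv_def\<close>)
  also have "\<dots> = sc (c1 (Suc (Suc p))) Y"
    unfolding IH fa_sc fX c1.simps(2)[of "Suc p"] by (simp add: algebra_simps)
  finally show ?case unfolding hY Y_def[symmetric] .
qed

lemma qpa: "qp hbar (a - 2 * of_nat p) = qp hbar a * inverse (exp hbar) ^ (2 * p)"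
  using qp_add[of a "- 2 * of_nat p"] qp_m2n[of p] by simp

lemma c1_closed: "(exp hbar ^ 2 - 1) * (exp hbar - inverse (exp hbar)) * c1 n
   = (exp hbar ^ (2 * n) - 1) * (qp hbar a * exp hbar ^ 2 * inverse (exp hbar) ^ (2 * n) - inverse (qp hbar a))"
proof (induction n)
  case 0 then show ?case by simp
next
  case (Suc n)
  define A where "A = qp hbar a"
  define X where "X = exp hbar ^ (2 * n)"
  define Y where "Y = inverse (exp hbar) ^ (2 * n)"
  have QQ: "exp hbar * inverse (exp hbar) = 1" by simp
  have AA: "A * inverse A = 1" by (simp add: A_def qp_nz)
  have XY: "X * Y = 1" by (simp only: X_def Y_def power_mult_distrib[symmetric]) simp
  have D: "exp hbar - inverse (exp hbar) \<noteq> 0" using Q1i by simp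
  have e1: "qp hbar (a - 2 * of_nat n) = A * Y" by (simp add: qpa A_def Y_def)
  have e2: "qp hbar (- (a - 2 * of_nat n)) = inverse A * X"
  proof -
    have iY: "inverse Y = X" using XY by (intro inverse_unique) (simp add: mult.commute)
    show ?thesis by (simp only: qp_neg e1 inverse_mult_distrib iY)
  qed
  have eX: "exp hbar ^ (2 * Suc n) = exp hbar ^ 2 * X" by (simp only: mult_Suc_right power_add X_def)
  have eY: "inverse (exp hbar) ^ (2 * Suc n) = inverse (exp hbar) ^ 2 * Y" by (simp only: mult_Suc_right power_add Y_def)
  have IH: "(exp hbar ^ 2 - 1) * (exp hbar - inverse (exp hbar)) * c1 n = (X - 1) * (A * exp hbar ^ 2 * Y - inverse A)"
    using Suc by (simp add: A_def X_def Y_def)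
  have gen: "\<And>M Dd c nn. Dd \<noteq> 0 \<Longrightarrow> M * Dd * (c + nn / Dd) = M * Dd * c + M * (nn::complex)"
    by (simp add: field_simps)
  have "(exp hbar ^ 2 - 1) * (exp hbar - inverse (exp hbar)) * c1 (Suc n) = (exp hbar ^ 2 - 1) * (exp hbar - inverse (exp hbar)) * c1 n + (exp hbar ^ 2 - 1) * (A * Y - inverse A * X)"
    unfolding c1.simps e1 e2 using D by (rule gen)
  also have "\<dots> = (exp hbar ^ 2 * X - 1) * (A * exp hbar ^ 2 * (inverse (exp hbar) ^ 2 * Y) - inverse A)"
  proof -
    have r: "A * exp hbar ^ 2 * (inverse (exp hbar) ^ 2 * Y) = A * Y"
      using QQ by (simp add: power_mult_distrib[symmetric] mult.assoc[symmetric])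
    show ?thesis unfolding IH r by (simp add: algebra_simps)
  qed
  finally show ?case unfolding eX eY A_def .
qed

lemma c1_nz: "c1 (Suc p) \<noteq> 0"
proof
  assume c: "c1 (Suc p) = 0"
  define Q where "Q = exp hbar"
  define A where "A = qp hbar a"
  define X where "X = exp hbar ^ (2 * Suc p)"
  define Y where "Y = inverse (exp hbar) ^ (2 * Suc p)"
  have QQ: "Q * inverse Q = 1" by (simp add: Q_def)
  have AA: "A * inverse A = 1" by (simp add: A_def qp_nz)
  have XY: "X * Y = 1" by (simp only: X_def Y_def power_mult_distrib[symmetric]) simp
  have X1: "X \<noteq> 1" using qgen[of "2 * Suc p"] by (simp add: X_def)
  have "(X - 1) * (A * Q ^ 2 * Y - inverse A) = 0"
    using c1_closed[of "Suc p"] c by (simp add: Q_def A_def X_def Y_def)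
  then have h: "A * Q ^ 2 * Y = inverse A" using X1 by simp
  have A2: "A * A = - (inverse Q ^ 2)"
  proof -
    have "qp hbar (2 * a) = A * A" by (simp only: mult_2 qp_add A_def)
    moreover have "qp hbar (- 2) = inverse Q ^ 2" by (simp only: qp_neg qp_2 Q_def power_inverse)
    ultimately show ?thesis using cond by simp
  qed
  have "A * A * exp hbar ^ 2 = A * A * exp hbar ^ 2 * (X * Y)" using XY by simp
  also have "\<dots> = X * (A * (A * exp hbar ^ 2 * Y))" by (simp add: algebra_simps)
  also have "\<dots> = X * (A * inverse A)" by (simp only: h[unfolded Q_def])
  also have "\<dots> = X" using AA by simp
  finally have "- (inverse (exp hbar) ^ 2) * exp hbar ^ 2 = X" using A2 by (simp add: Q_def)
  then have "X = -1" by (simp add: power_inverse field_simps)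
  then have "exp hbar ^ (2 * Suc p) * exp hbar ^ (2 * Suc p) = 1" by (simp add: X_def)
  then have "exp hbar ^ (2 * Suc p + 2 * Suc p) = 1" by (simp only: power_add)
  then show False using qgen[of "2 * Suc p + 2 * Suc p"] by simp
qed



abbreviation "uu \<equiv> (\<lambda>i::nat\<times>nat. u (fst i) (snd i))"

lemma span_closed:
  assumes L: "lin_op A" and G: "\<And>p r. A (u p r) \<in> span (range uu)"
  shows "A ` span (range uu) \<subseteq> span (range uu)"
proof -
  have "span (range uu) \<subseteq> {x. A x \<in> span (range uu)}"
  proof (rule span_minimal)
    show "range uu \<subseteq> {x. A x \<in> span (range uu)}" using G by auto
    show "subspace {x. A x \<in> span (range uu)}"
      unfolding subspace_def using L
      by (simp add: lin_zero lin_add lin_sc span_zero span_add span_scale)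
  qed
  then show ?thesis by auto
qed

lemma u_in: "u p r \<in> span (range uu)"
proof -
  have "uu (p, r) \<in> range uu" by blast
  then show ?thesis by (auto intro: span_base)
qed

lemma sc_u_in: "sc c (u p r) \<in> span (range uu)"
  by (rule span_scale[OF u_in])

lemma span_sub: "is_submodule sc ea eb fa fb ha hb (span (range uu))"
  unfolding is_submodule_def
proof (intro conjI ballI)
  show "subspace (span (range uu))" by simp
  fix A assume "A \<in> {ea, eb, fa, fb, ha, hb}"
  then have L: "lin_op A" by (rule lin_gen)
  have G: "A (u p r) \<in> span (range uu)" if A: "A \<in> {ea, eb, fa, fb, ha, hb}" for p r
  proof -
    have "A = ea \<or> A = eb \<or> A = fa \<or> A = fb \<or> A = ha \<or> A = hb" using A by blast
    then show ?thesis
    proof (elim disjE)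
      assume "A = ea" then show ?thesis
        by (cases p) (simp_all add: ea_u0 ea_u sc_u_in span_zero)
    next
      assume "A = eb" then show ?thesis
        by (cases r) (simp_all add: eb_u0 eb_u sc_u_in span_zero)
    next
      assume "A = fa" then show ?thesis by (simp add: u_Suc[symmetric] u_in)
    next
      assume "A = fb" then show ?thesis
        by (cases p) (simp_all add: fb_u0 fb_u sc_u_in span_zero)
    next
      assume "A = ha" then show ?thesis using wv_u[of p r] by (simp add: wv_def sc_u_in)
    next
      assume "A = hb" then show ?thesis using wv_u[of p r] by (simp add: wv_def sc_u_in)
    qed
  qed
  show "A ` span (range uu) \<subseteq> span (range uu)"
    by (rule span_closed[OF L G]) fact
qed

lemma v_in_span: "v \<in> span (range uu)"
  using u_in[of 0 0] by (simp add: u_00)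

definition wa :: "nat \<times> nat \<Rightarrow> complex" where "wa i = a - 2 * of_nat (fst i)"
definition wb :: "nat \<times> nat \<Rightarrow> complex" where "wb i = 2 * of_nat (fst i) - 2 * of_nat (snd i)"

lemma ha_uu: "ha (uu i) = sc (wa i) (uu i)" using wv_u by (simp add: wv_def wa_def)
lemma hb_uu: "hb (uu i) = sc (wb i) (uu i)" using wv_u by (simp add: wv_def wb_def)

lemma w_inj: "i \<noteq> j \<Longrightarrow> wa i \<noteq> wa j \<or> wb i \<noteq> wb j"
  by (cases i; cases j) (auto simp: wa_def wb_def)

lemma extract_step:
  assumes W: "subspace W" and HW: "H ` W \<subseteq> W" and L: "lin_op H"
    and Hw: "\<And>i. H (uu i) = sc (w i) (uu i)"
    and fin: "finite I" and j: "j \<in> I"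
    and S: "(\<Sum>i\<in>I. sc (c i) (uu i)) \<in> W"
  shows "(\<Sum>i\<in>I - {j}. sc (c i * (w i - w j)) (uu i)) \<in> W"
proof -
  let ?x = "\<Sum>i\<in>I. sc (c i) (uu i)"
  have "H ?x - sc (w j) ?x \<in> W"
    using S HW W by (intro subspace_diff subspace_scale) auto
  moreover have "H ?x - sc (w j) ?x = (\<Sum>i\<in>I. sc (c i * (w i - w j)) (uu i))"
  proof -
    have "H ?x = (\<Sum>i\<in>I. H (sc (c i) (uu i)))"
      using fin by (induction I rule: finite_induct) (simp_all add: lin_zero[OF L] lin_add[OF L])
    then show ?thesis
      by (simp add: lin_sc[OF L] Hw scale_sum_right sum_subtractf[symmetric] algebra_simps)
  qed
  moreover have "(\<Sum>i\<in>I. sc (c i * (w i - w j)) (uu i)) = (\<Sum>i\<in>I - {j}. sc (c i * (w i - w j)) (uu i))"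
    using fin j by (intro sum.mono_neutral_right) auto
  ultimately show ?thesis by simp
qed

lemma extr_lem:
  assumes W: "subspace W" and HaW: "ha ` W \<subseteq> W" and HbW: "hb ` W \<subseteq> W"
  shows "finite I \<Longrightarrow> (\<Sum>i\<in>I. sc (c i) (uu i)) \<in> W \<Longrightarrow> k \<in> I \<Longrightarrow> sc (c k) (uu k) \<in> W"
proof (induction "card I" arbitrary: I c rule: less_induct)
  case less
  show ?case
  proof (cases "I = {k}")
    case True then show ?thesis using less.prems by simp
  next
    case False
    then obtain j where j: "j \<in> I" "j \<noteq> k" using less.prems(3) by blast
    have cardlt: "card (I - {j}) < card I" by (rule card_Diff1_less[OF less.prems(1) j(1)])
    have kin: "k \<in> I - {j}" using j less.prems(3) by auto
    have gen: "sc (c k) (uu k) \<in> W" if HW: "H ` W \<subseteq> W" and L: "lin_op H"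
      and Hw: "\<And>i. H (uu i) = sc (w i) (uu i)" and ne: "w k \<noteq> w j" for H w
    proof -
      have "(\<Sum>i\<in>I - {j}. sc (c i * (w i - w j)) (uu i)) \<in> W"
        by (rule extract_step[OF W HW L Hw less.prems(1) j(1) less.prems(2)])
      then have "sc (c k * (w k - w j)) (uu k) \<in> W"
        using less.hyps[OF cardlt, of "\<lambda>i. c i * (w i - w j)"] less.prems(1) kin by simp
      then have "sc (inverse (w k - w j)) (sc (c k * (w k - w j)) (uu k)) \<in> W"
        by (rule subspace_scale[OF W])
      moreover have "inverse (w k - w j) * (c k * (w k - w j)) = c k" using ne by (simp add: field_simps)
      ultimately show ?thesis by simp
    qed
    from w_inj[OF j(2)[symmetric]] show ?thesis
    proof
      assume "wa k \<noteq> wa j" then show ?thesis by (rule gen[OF HaW linI(5) ha_uu])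
    next
      assume "wb k \<noteq> wb j" then show ?thesis by (rule gen[OF HbW linI(6) hb_uu])
    qed
  qed
qed

lemma u_descent:
  assumes Wsub: "is_submodule sc ea eb fa fb ha hb W"
  shows "u p r \<in> W \<Longrightarrow> u p r \<noteq> 0 \<Longrightarrow> v \<in> W"
proof (induction "2 * r + p" arbitrary: p r rule: less_induct)
  case less
  have W: "subspace W" and EA: "ea ` W \<subseteq> W" and EB: "eb ` W \<subseteq> W"
    using Wsub unfolding is_submodule_def by auto
  show ?case
  proof (cases p)
    case (Suc p')
    have "ea (u p r) \<in> W" using EA less.prems(1) by blast
    then have "sc (c1 (Suc p')) (u p' r) \<in> W" using ea_u[of p' r] Suc by simp
    then have "sc (inverse (c1 (Suc p'))) (sc (c1 (Suc p')) (u p' r)) \<in> W" by (rule subspace_scale[OF W])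
    then have i: "u p' r \<in> W" using c1_nz by simp
    have n: "u p' r \<noteq> 0" using less.prems(2) Suc u_Suc[of p' r] by auto
    show ?thesis using less.hyps[where p=p' and r=r] i n Suc by simp
  next
    case 0
    show ?thesis
    proof (cases r)
      case 0 then show ?thesis using less.prems \<open>p = 0\<close> by (simp add: u_00)
    next
      case (Suc r')
      have "eb (u p r) \<in> W" using EB less.prems(1) by blast
      then have "sc (gc (Suc r')) (u 1 r') \<in> W" using eb_u[of 0 r'] Suc \<open>p = 0\<close> by simp
      then have "sc (inverse (gc (Suc r'))) (sc (gc (Suc r')) (u 1 r')) \<in> W" by (rule subspace_scale[OF W])
      then have i: "u 1 r' \<in> W" using gc_nz by simp
      have n: "u 1 r' \<noteq> 0" using less.prems(2) Suc \<open>p = 0\<close> u0_Suc[of r'] by auto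
      show ?thesis using less.hyps[where p=1 and r=r'] i n Suc \<open>p = 0\<close> by simp
    qed
  qed
qed

lemma irreducible:
  assumes v_nz: "v \<noteq> 0"
    and v_gen: "\<forall>W. is_submodule sc ea eb fa fb ha hb W \<and> v \<in> W \<longrightarrow> W = UNIV"
  shows "irreducible_module sc ea eb fa fb ha hb"
  unfolding irreducible_module_def
proof (intro conjI allI impI)
  show "(UNIV :: 'v set) \<noteq> {0}" using v_nz by auto
  have SU: "span (range uu) = UNIV" using v_gen span_sub v_in_span by blast
  fix W assume Wsub: "is_submodule sc ea eb fa fb ha hb W"
  have W: "subspace W" and HA: "ha ` W \<subseteq> W" and HB: "hb ` W \<subseteq> W"
    using Wsub unfolding is_submodule_def by auto
  show "W = {0} \<or> W = UNIV"
  proof (cases "W = {0}")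
    case True then show ?thesis by simp
  next
    case False
    then obtain w where wW: "w \<in> W" and wnz: "w \<noteq> 0" using subspace_0[OF W] by blast
    have "w \<in> span (range uu)" using SU by simp
    then obtain t r where t: "finite t" "t \<subseteq> range uu" and wsum: "w = (\<Sum>x\<in>t. sc (r x) x)"
      unfolding span_explicit by blast
    define g where "g x = (SOME i. x = uu i)" for x
    have gx: "uu (g x) = x" if "x \<in> t" for x
    proof -
      from that t(2) obtain i where "x = uu i" by blast
      then show ?thesis unfolding g_def by (metis (mono_tags) someI)
    qed
    have inj: "inj_on g t" by (metis gx inj_onI)
    define c where "c i = r (uu i)" for i
    have wsum2: "w = (\<Sum>i\<in>g ` t. sc (c i) (uu i))"
      unfolding wsum sum.reindex[OF inj] c_def by (intro sum.cong) (simp_all add: gx)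
    then have inW: "(\<Sum>i\<in>g ` t. sc (c i) (uu i)) \<in> W" using wW by simp
    have "\<exists>i\<in>g ` t. sc (c i) (uu i) \<noteq> 0"
    proof (rule ccontr)
      assume "\<not> ?thesis"
      then have "(\<Sum>i\<in>g ` t. sc (c i) (uu i)) = 0" by (intro sum.neutral) blast
      then show False using wnz wsum2 by simp
    qed
    then obtain i where i: "i \<in> g ` t" "sc (c i) (uu i) \<noteq> 0" by blast
    have "sc (c i) (uu i) \<in> W" using extr_lem[OF W HA HB _ inW i(1)] t(1) by simp
    then have "sc (inverse (c i)) (sc (c i) (uu i)) \<in> W" by (rule subspace_scale[OF W])
    then have "uu i \<in> W" using i(2) by simp
    then have "v \<in> W" using u_descent[OF Wsub, of "fst i" "snd i"] i(2) by auto
    then show ?thesis using v_gen Wsub by blast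
  qed
qed

end

theorem mainTheorem4:
  fixes hbar :: complex and lam :: "complex \<times> complex"
    and sc :: "complex \<Rightarrow> 'v::ab_group_add \<Rightarrow> 'v"
    and ea eb fa fb ha hb :: "'v \<Rightarrow> 'v" and v :: 'v
  assumes q_generic: "\<forall>n::nat. n > 0 \<longrightarrow> exp hbar ^ n \<noteq> 1"
    and lam_beta: "ip_beta lam = 0"
    and lam_cond: "qp hbar (2 * ip_alpha lam) = - qp hbar (-2)"
    and modV: "Uq_sp4_module hbar sc ea eb fa fb ha hb"
    and v_nz: "v \<noteq> 0"
    and v_hw: "ea v = 0" "eb v = 0" "fb v = 0" "hb v = 0" "ha v = sc (ip_alpha lam) v"
    and v_fdelta: "f_delta hbar sc fa fb v = 0"
    and v_gen: "\<forall>W. is_submodule sc ea eb fa fb ha hb W \<and> v \<in> W \<longrightarrow> W = UNIV"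
  shows "irreducible_module sc ea eb fa fb ha hb"
proof -
  note M = modV[unfolded Uq_sp4_module_def Let_def]
  have VS: "vector_space sc" using M by blast
  have LIN: "Vector_Spaces.linear sc sc A" if "A \<in> {ea, eb, fa, fb, ha, hb}" for A
    using M that by blast
  have CE: "\<And>A B w. comm A B = (\<lambda>w. sc k (B w)) \<Longrightarrow> A (B w) = B (A w) + sc k (B w)" for k
  proof -
    fix A B w assume "comm A B = (\<lambda>w. sc k (B w))"
    then have "A (B w) - B (A w) = sc k (B w)" unfolding comm_def by metis
    then show "A (B w) = B (A w) + sc k (B w)" by (simp add: diff_eq_eq add.commute)
  qed
  have CZ: "\<And>A B w. comm A B = (\<lambda>w. 0) \<Longrightarrow> A (B w) = B (A w)"
  proof -
    fix A B w assume "comm A B = (\<lambda>w. 0)"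
    then have "A (B w) - B (A w) = 0" unfolding comm_def by metis
    then show "A (B w) = B (A w)" by simp
  qed
  have WT: "\<forall>a b w. is_weight_vec sc ha hb a b w \<longrightarrow>
        comm ea fa w = sc ((qp hbar a - qp hbar (-a)) / (exp hbar - inverse (exp hbar))) w \<and>
        comm eb fb w = sc ((qp hbar b - qp hbar (-b)) / (exp hbar ^ 2 - inverse (exp hbar) ^ 2)) w"
    using M by blast
  interpret I: sp4 hbar sc ea eb fa fb ha hb v "ip_alpha lam"
  proof (rule sp4.intro)
    show "vector_space sc" by (rule VS)
    show "\<And>A x y. A \<in> {ea, eb, fa, fb, ha, hb} \<Longrightarrow> A (x + y) = A x + A y"
      using LIN Vector_Spaces.linear_iff by metis
    show "\<And>A c x. A \<in> {ea, eb, fa, fb, ha, hb} \<Longrightarrow> A (sc c x) = sc c (A x)"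
      using LIN Vector_Spaces.linear_iff by metis
    show "\<And>w. ha (fa w) = fa (ha w) + sc (- 2) (fa w)" using M by (intro CE) blast
    show "\<And>w. ha (fb w) = fb (ha w) + sc 2 (fb w)" using M by (intro CE) blast
    show "\<And>w. hb (fa w) = fa (hb w) + sc 2 (fa w)" using M by (intro CE) blast
    show "\<And>w. hb (fb w) = fb (hb w) + sc (- 4) (fb w)" using M by (intro CE) blast
    show "\<And>w s t. ha w = sc s w \<Longrightarrow> hb w = sc t w \<Longrightarrow>
      ea (fa w) = fa (ea w) + sc ((qp hbar s - qp hbar (- s)) / (exp hbar - inverse (exp hbar))) w"
    proof -
      fix w s t assume "ha w = sc s w" "hb w = sc t w"
      then have "comm ea fa w = sc ((qp hbar s - qp hbar (-s)) / (exp hbar - inverse (exp hbar))) w"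
        using WT unfolding is_weight_vec_def by blast
      then show "ea (fa w) = fa (ea w) + sc ((qp hbar s - qp hbar (- s)) / (exp hbar - inverse (exp hbar))) w"
        unfolding comm_def by (simp add: diff_eq_eq add.commute)
    qed
    show "\<And>w s t. ha w = sc s w \<Longrightarrow> hb w = sc t w \<Longrightarrow>
      eb (fb w) = fb (eb w) + sc ((qp hbar t - qp hbar (- t)) / (exp hbar ^ 2 - inverse (exp hbar) ^ 2)) w"
    proof -
      fix w s t assume "ha w = sc s w" "hb w = sc t w"
      then have "comm eb fb w = sc ((qp hbar t - qp hbar (-t)) / (exp hbar ^ 2 - inverse (exp hbar) ^ 2)) w"
        using WT unfolding is_weight_vec_def by blast
      then show "eb (fb w) = fb (eb w) + sc ((qp hbar t - qp hbar (- t)) / (exp hbar ^ 2 - inverse (exp hbar) ^ 2)) w"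
        unfolding comm_def by (simp add: diff_eq_eq add.commute)
    qed
    show "\<And>w. ea (fb w) = fb (ea w)" using M by (intro CZ) blast
    show "\<And>w. eb (fa w) = fa (eb w)" using M by (intro CZ) blast
    show "\<And>w. fa (fa (fa (fb w))) - sc ((exp hbar)\<^sup>2 + 1 + (inverse (exp hbar))\<^sup>2) (fa (fa (fb (fa w)))) +
         sc ((exp hbar)\<^sup>2 + 1 + (inverse (exp hbar))\<^sup>2) (fa (fb (fa (fa w)))) - fb (fa (fa (fa w))) = 0"
      using M unfolding serre3_def by blast
    show "\<And>w. fb (fb (fa w)) - sc ((exp hbar)\<^sup>2 + (inverse (exp hbar))\<^sup>2) (fb (fa (fb w))) + fa (fb (fb w)) = 0"
      using M unfolding serre2_def by blast
    show "\<And>n::nat. 0 < n \<Longrightarrow> exp hbar ^ n \<noteq> 1" using q_generic by blast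
    show "qp hbar (2 * ip_alpha lam) = - qp hbar (- 2)" by (rule lam_cond)
    show "ea v = 0" "eb v = 0" "fb v = 0" "hb v = 0" "ha v = sc (ip_alpha lam) v" by (rule v_hw)+
    show "f_delta hbar sc fa fb v = 0" by (rule v_fdelta)
  qed
  show ?thesis by (rule I.irreducible[OF v_nz v_gen])
qed

end
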